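(* Let $\mathcal{A}$ be a strong $T_0$-family and $r\in\mathbb{R}$. Let $\{x_\xi:\xi<\omega_1\}\subseteq c_{00}(\omega_1)$ consist of vectors with pairwise disjoint supports such that $\|x_\xi\|_\mathcal{A}=r$ for all $\xi<\omega_1$. Then there are $\xi<\eta<\omega_1$ such that $\|x_\xi-x_\eta\|_\mathcal{A}=\sqrt2\,r$, and there are $\xi<\eta<\omega_1$ such that $\|x_\xi-x_\eta\|_\mathcal{A}=r$.
   Context: $c_{00}(\omega_1)$ is the set of $x\in\mathbb{R}^{\omega_1}$ with finite support $\text{supp}(x)=\{\alpha:x(\alpha)\ne0\}$. For a family $\mathcal{A}$ of finite subsets of $\omega_1$, $\|x\|_\mathcal{A}=\sup_{A\in\mathcal{A}}\sqrt{\sum_{\alpha\in A}x(\alpha)^2}$. For disjoint $A,B$, $A\otimes B=\{\{\alpha,\beta\}:\alpha\in A,\beta\in B\}$. A function $c=(c_0,c_1):[\omega_1]^2\to I\times J$ ($0,1\in I$, $J\ne\emptyset$) is a $T$-coloring if for every uncountable pairwise disjoint family $\{\{a_\xi(0),a_\xi(1)\}:\xi<\omega_1\}$ of pairs and all $(i_0,j_0),(i_1,j_1)\in I\times J$ there are $\xi<\eta$ with $c(\{a_\xi(0),a_\eta(0)\})=(i_0,j_0)$, $c(\{a_\xi(1),a_\eta(1)\})=(i_1,j_1)$; it is a strong $T$-coloring if moreover for every uncountable pairwise disjoint family $\{A_\xi:\xi<\omega_1\}$ of finite subsets of $\omega_1$ there are $\xi<\eta$ with $c_0[A_\xi\otimes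 A_\eta]=\{0\}$ and $\xi<\eta$ with $c_0[A_\xi\otimes A_\eta]=\{1\}$. A strong $T_0$-family is $\mathcal{A}_c=\{a\subseteq\omega_1\text{ finite}:c_0[[a]^2]\subseteq\{0\}\}$ for a strong $T$-coloring $c$. *)

theory Defs
  imports "HOL-Analysis.Analysis"
begin

text \<open>The type 'a, with its well-order, represents omega_1: it is uncountable and
every proper initial segment is countable.\<close>
definition omega1_type :: "'a::wellorder itself \<Rightarrow> bool" where
  "omega1_type _ \<longleftrightarrow> uncountable (UNIV :: 'a set) \<and> (\<forall>x::'a. countable {y. y < x})"

definition supp :: "('a \<Rightarrow> real) \<Rightarrow> 'a set" where
  "supp x = {\<alpha>. x \<alpha> \<noteq> 0}"

definition c00 :: "('a \<Rightarrow> real) set" where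
  "c00 = {x. finite (supp x)}"

definition normA :: "'a set set \<Rightarrow> ('a \<Rightarrow> real) \<Rightarrow> real" where
  "normA \<A> x = (SUP A\<in>\<A>. sqrt (\<Sum>\<alpha>\<in>A. (x \<alpha>)\<^sup>2))"

definition otimes :: "'a set \<Rightarrow> 'a set \<Rightarrow> 'a set set" where
  "otimes A B = {{\<alpha>, \<beta>} | \<alpha> \<beta>. \<alpha> \<in> A \<and> \<beta> \<in> B}"

definition pairs :: "'a set \<Rightarrow> 'a set set" where
  "pairs a = {{\<alpha>, \<beta>} | \<alpha> \<beta>. \<alpha> \<in> a \<and> \<beta> \<in> a \<and> \<alpha> \<noteq> \<beta>}"

text \<open>A T-coloring c : [omega_1]^2 \<rightarrow> I \<times> J (with 0,1 \<in> I, J nonempty).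
A pairwise disjoint uncountable family of pairs is indexed by xi < omega_1 via a0, a1.\<close>
definition T_coloring :: "('a::wellorder set \<Rightarrow> ('i::zero_neq_one \<times> 'j)) \<Rightarrow> 'i set \<Rightarrow> 'j set \<Rightarrow> bool" where
  "T_coloring c I J \<longleftrightarrow>
     0 \<in> I \<and> 1 \<in> I \<and> J \<noteq> {} \<and>
     (\<forall>\<alpha> \<beta>. \<alpha> \<noteq> \<beta> \<longrightarrow> c {\<alpha>, \<beta>} \<in> I \<times> J) \<and>
     (\<forall>(a0::'a \<Rightarrow> 'a) a1.
        (\<forall>\<xi>. a0 \<xi> \<noteq> a1 \<xi>) \<and>
        (\<forall>\<xi> \<eta>. \<xi> \<noteq> \<eta> \<longrightarrow> {a0 \<xi>, a1 \<xi>} \<inter> {a0 \<eta>, a1 \<eta>} = {}) \<longrightarrow>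
        (\<forall>p0\<in>I \<times> J. \<forall>p1\<in>I \<times> J. \<exists>\<xi> \<eta>. \<xi> < \<eta> \<and>
            c {a0 \<xi>, a0 \<eta>} = p0 \<and> c {a1 \<xi>, a1 \<eta>} = p1))"

definition strong_T_coloring :: "('a::wellorder set \<Rightarrow> ('i::zero_neq_one \<times> 'j)) \<Rightarrow> 'i set \<Rightarrow> 'j set \<Rightarrow> bool" where
  "strong_T_coloring c I J \<longleftrightarrow> T_coloring c I J \<and>
     (\<forall>A :: 'a \<Rightarrow> 'a set.
        (\<forall>\<xi>. finite (A \<xi>) \<and> A \<xi> \<noteq> {}) \<and>
        (\<forall>\<xi> \<eta>. \<xi> \<noteq> \<eta> \<longrightarrow> A \<xi> \<inter> A \<eta> = {}) \<longrightarrow>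
        (\<exists>\<xi> \<eta>. \<xi> < \<eta> \<and> (fst \<circ> c) ` otimes (A \<xi>) (A \<eta>) = {0}) \<and>
        (\<exists>\<xi> \<eta>. \<xi> < \<eta> \<and> (fst \<circ> c) ` otimes (A \<xi>) (A \<eta>) = {1}))"

definition T0_family :: "('a set \<Rightarrow> ('i::zero_neq_one \<times> 'j)) \<Rightarrow> 'a set set" where
  "T0_family c = {a. finite a \<and> (fst \<circ> c) ` pairs a \<subseteq> {0}}"

end

theory Submission
  imports Defs
begin

lemma T0_sub:
  assumes "a \<in> T0_family c" "b \<subseteq> a" shows "b \<in> T0_family c"
proof -
  have "pairs b \<subseteq> pairs a" using assms(2) unfolding pairs_def by blast
  thus ?thesis using assms unfolding T0_family_def by (auto intro: finite_subset)
qed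

lemma T0_empty: "{} \<in> T0_family c"
  unfolding T0_family_def pairs_def by auto

lemma T0_single: "{\<alpha>} \<in> T0_family c"
  unfolding T0_family_def pairs_def by auto

lemma sum_supp:
  assumes "finite a"
  shows "(\<Sum>\<alpha>\<in>a. (y \<alpha>)\<^sup>2) = (\<Sum>\<alpha>\<in>a \<inter> supp y. (y \<alpha>)\<^sup>2)"
  using assms by (intro sum.mono_neutral_right) (auto simp: supp_def)

lemma normA_bdd:
  assumes "finite (supp y)"
  shows "bdd_above ((\<lambda>A. sqrt (\<Sum>\<alpha>\<in>A. (y \<alpha>)\<^sup>2)) ` T0_family c)"
proof (rule bdd_aboveI2)
  fix a assume "a \<in> T0_family c"
  hence fa: "finite a" unfolding T0_family_def by auto
  have "(\<Sum>\<alpha>\<in>a. (y \<alpha>)\<^sup>2) = (\<Sum>\<alpha>\<in>a \<inter> supp y. (y \<alpha>)\<^sup>2)" by (rule sum_supp[OF fa])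
  also have "\<dots> \<le> (\<Sum>\<alpha>\<in>supp y. (y \<alpha>)\<^sup>2)"
    using assms by (intro sum_mono2) auto
  finally show "sqrt (\<Sum>\<alpha>\<in>a. (y \<alpha>)\<^sup>2) \<le> sqrt (\<Sum>\<alpha>\<in>supp y. (y \<alpha>)\<^sup>2)" by simp
qed

lemma normA_ge:
  assumes "finite (supp y)" "a \<in> T0_family c"
  shows "sqrt (\<Sum>\<alpha>\<in>a. (y \<alpha>)\<^sup>2) \<le> normA (T0_family c) y"
  unfolding normA_def using normA_bdd[OF assms(1)] assms(2) by (rule cSUP_upper2) simp

lemma normA_le:
  assumes "\<And>a. a \<in> T0_family c \<Longrightarrow> sqrt (\<Sum>\<alpha>\<in>a. (y \<alpha>)\<^sup>2) \<le> M"
  shows "normA (T0_family c) y \<le> M"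
  unfolding normA_def using T0_empty assms by (intro cSUP_least) auto

lemma normA_ge_sq:
  assumes "finite (supp y)" "a \<in> T0_family c"
  shows "(\<Sum>\<alpha>\<in>a. (y \<alpha>)\<^sup>2) \<le> (normA (T0_family c) y)\<^sup>2"
proof -
  have "0 \<le> (\<Sum>\<alpha>\<in>a. (y \<alpha>)\<^sup>2)" by (simp add: sum_nonneg)
  moreover have "sqrt (\<Sum>\<alpha>\<in>a. (y \<alpha>)\<^sup>2) \<le> normA (T0_family c) y" by (rule normA_ge[OF assms])
  ultimately show ?thesis
    by (metis real_le_rsqrt real_sqrt_ge_zero order_trans real_sqrt_le_iff sqrt_le_D)
qed

lemma normA_nonneg:
  assumes "finite (supp y)"
  shows "0 \<le> normA (T0_family c) y"
  using normA_ge[OF assms T0_empty] by simp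

lemma normA_attain:
  assumes "finite (supp y)"
  shows "\<exists>a\<in>T0_family c. a \<subseteq> supp y \<and> normA (T0_family c) y = sqrt (\<Sum>\<alpha>\<in>a. (y \<alpha>)\<^sup>2)"
proof -
  define V where "V = (\<lambda>b. sqrt (\<Sum>\<alpha>\<in>b. (y \<alpha>)\<^sup>2)) ` {b. b \<in> T0_family c \<and> b \<subseteq> supp y}"
  have fV: "finite V" unfolding V_def using assms by (intro finite_imageI) (auto intro: finite_subset[of _ "Pow (supp y)"])
  have neV: "V \<noteq> {}" unfolding V_def using T0_empty by blast
  have "Max V \<in> V" using fV neV by simp
  then obtain a where a: "a \<in> T0_family c" "a \<subseteq> supp y" "Max V = sqrt (\<Sum>\<alpha>\<in>a. (y \<alpha>)\<^sup>2)"
    unfolding V_def by auto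
  have "normA (T0_family c) y \<le> Max V"
  proof (rule normA_le)
    fix b assume b: "b \<in> T0_family c"
    hence fb: "finite b" unfolding T0_family_def by auto
    have "b \<inter> supp y \<in> T0_family c" using T0_sub[OF b] by blast
    hence "sqrt (\<Sum>\<alpha>\<in>b \<inter> supp y. (y \<alpha>)\<^sup>2) \<in> V" unfolding V_def by auto
    hence "sqrt (\<Sum>\<alpha>\<in>b \<inter> supp y. (y \<alpha>)\<^sup>2) \<le> Max V" using fV by simp
    thus "sqrt (\<Sum>\<alpha>\<in>b. (y \<alpha>)\<^sup>2) \<le> Max V" using sum_supp[OF fb, of y] by simp
  qed
  moreover have "Max V \<le> normA (T0_family c) y" using a normA_ge[OF assms a(1)] by simp
  ultimately show ?thesis using a by auto
qed


lemma sq_diff_disj: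
  assumes "supp u \<inter> supp v = {}"
  shows "(\<Sum>\<alpha>\<in>b. ((u - v) \<alpha>)\<^sup>2) = (\<Sum>\<alpha>\<in>b. (u \<alpha>)\<^sup>2) + (\<Sum>\<alpha>\<in>b. (v \<alpha>)\<^sup>2)"
proof -
  have "\<And>\<alpha>. ((u - v) \<alpha>)\<^sup>2 = (u \<alpha>)\<^sup>2 + (v \<alpha>)\<^sup>2"
  proof -
    fix \<alpha>
    have "u \<alpha> * v \<alpha> = 0" using assms unfolding supp_def by auto
    thus "((u - v) \<alpha>)\<^sup>2 = (u \<alpha>)\<^sup>2 + (v \<alpha>)\<^sup>2" by (simp add: power2_eq_square algebra_simps)
  qed
  thus ?thesis by (simp add: sum.distrib)
qed

lemma supp_diff_fin:
  assumes "finite (supp u)" "finite (supp v)" shows "finite (supp (u - v))"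
  by (rule finite_subset[of _ "supp u \<union> supp v"]) (use assms in \<open>auto simp: supp_def\<close>)

theorem lemma4p1:
  fixes c :: "'a::wellorder set \<Rightarrow> ('i::zero_neq_one \<times> 'j)"
    and I :: "'i set" and J :: "'j set"
    and x :: "'a \<Rightarrow> ('a \<Rightarrow> real)" and r :: real
  assumes "omega1_type TYPE('a)"
    and "strong_T_coloring c I J"
    and "\<And>\<xi>. x \<xi> \<in> c00"
    and "\<And>\<xi> \<eta>. \<xi> \<noteq> \<eta> \<Longrightarrow> supp (x \<xi>) \<inter> supp (x \<eta>) = {}"
    and "\<And>\<xi>. normA (T0_family c) (x \<xi>) = r"
  shows "(\<exists>\<xi> \<eta>. \<xi> < \<eta> \<and> normA (T0_family c) (x \<xi> - x \<eta>) = sqrt 2 * r)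
       \<and> (\<exists>\<xi> \<eta>. \<xi> < \<eta> \<and> normA (T0_family c) (x \<xi> - x \<eta>) = r)"
proof -
  let ?F = "T0_family c"
  have fin: "\<And>\<xi>. finite (supp (x \<xi>))" using assms(3) unfolding c00_def by auto
  have ST: "\<And>A :: 'a \<Rightarrow> 'a set. (\<forall>\<xi>. finite (A \<xi>) \<and> A \<xi> \<noteq> {}) \<Longrightarrow>
        (\<forall>\<xi> \<eta>. \<xi> \<noteq> \<eta> \<longrightarrow> A \<xi> \<inter> A \<eta> = {}) \<Longrightarrow>
        (\<exists>\<xi> \<eta>. \<xi> < \<eta> \<and> (fst \<circ> c) ` otimes (A \<xi>) (A \<eta>) = {0}) \<and>
        (\<exists>\<xi> \<eta>. \<xi> < \<eta> \<and> (fst \<circ> c) ` otimes (A \<xi>) (A \<eta>) = {1})"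
    using assms(2) unfolding strong_T_coloring_def by blast
  have r0: "0 \<le> r" using normA_nonneg[OF fin] assms(5) by metis
  show ?thesis
  proof (cases "r = 0")
    case True
    have z: "x \<xi> = (\<lambda>_. 0)" for \<xi>
    proof
      fix \<alpha>
      have "sqrt (\<Sum>\<beta>\<in>{\<alpha>}. (x \<xi> \<beta>)\<^sup>2) \<le> 0"
        using normA_ge[OF fin T0_single] assms(5) True by metis
      thus "x \<xi> \<alpha> = 0" by simp
    qed
    have n0: "normA ?F ((\<lambda>_. 0)::'a \<Rightarrow> real) = 0"
      using normA_le[of c "(\<lambda>_. 0)::'a \<Rightarrow> real" 0] normA_nonneg[of "(\<lambda>_. 0)::'a\<Rightarrow>real" c]
      by (simp add: supp_def)
    obtain \<xi> \<eta> :: 'a where "\<xi> < \<eta>"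
      using ST[of "\<lambda>\<xi>. {\<xi>}"] by auto
    have "x \<xi> - x \<eta> = (\<lambda>_. 0)" unfolding fun_diff_def z by simp
    hence "normA ?F (x \<xi> - x \<eta>) = r" using n0 True by simp
    thus ?thesis using True \<open>\<xi> < \<eta>\<close> by auto
  next
    case False
    hence rpos: "0 < r" using r0 by simp
    have "\<forall>\<xi>. \<exists>a. a \<in> ?F \<and> a \<subseteq> supp (x \<xi>) \<and> r = sqrt (\<Sum>\<alpha>\<in>a. (x \<xi> \<alpha>)\<^sup>2)"
    proof
      fix \<xi>
      obtain a where "a \<in> ?F" "a \<subseteq> supp (x \<xi>)" "normA ?F (x \<xi>) = sqrt (\<Sum>\<alpha>\<in>a. (x \<xi> \<alpha>)\<^sup>2)"
        using normA_attain[OF fin[of \<xi>]] by blast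
      thus "\<exists>a. a \<in> ?F \<and> a \<subseteq> supp (x \<xi>) \<and> r = sqrt (\<Sum>\<alpha>\<in>a. (x \<xi> \<alpha>)\<^sup>2)"
        using assms(5)[of \<xi>] by auto
    qed
    hence "\<exists>a. \<forall>\<xi>. a \<xi> \<in> ?F \<and> a \<xi> \<subseteq> supp (x \<xi>) \<and> r = sqrt (\<Sum>\<alpha>\<in>a \<xi>. (x \<xi> \<alpha>)\<^sup>2)"
      by (rule choice)
    then obtain a where a0: "\<forall>\<xi>. a \<xi> \<in> ?F \<and> a \<xi> \<subseteq> supp (x \<xi>) \<and> r = sqrt (\<Sum>\<alpha>\<in>a \<xi>. (x \<xi> \<alpha>)\<^sup>2)"
      by blast
    have a: "\<And>\<xi>. a \<xi> \<in> ?F" "\<And>\<xi>. a \<xi> \<subseteq> supp (x \<xi>)"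
       "\<And>\<xi>. r = sqrt (\<Sum>\<alpha>\<in>a \<xi>. (x \<xi> \<alpha>)\<^sup>2)" using a0 by auto
    have asq: "(\<Sum>\<alpha>\<in>a \<xi>. (x \<xi> \<alpha>)\<^sup>2) = r\<^sup>2" for \<xi>
      using a(3)[of \<xi>] by (simp add: sum_nonneg)
    have ane: "a \<xi> \<noteq> {}" for \<xi> using a(3)[of \<xi>] rpos by auto
    have afin: "finite (a \<xi>)" for \<xi> using a(1)[of \<xi>] unfolding T0_family_def by auto
    have sne: "supp (x \<xi>) \<noteq> {}" for \<xi> using a(2) ane by blast
    have upper: "(\<Sum>\<alpha>\<in>b. ((x \<xi> - x \<eta>) \<alpha>)\<^sup>2) = (\<Sum>\<alpha>\<in>b. (x \<xi> \<alpha>)\<^sup>2) + (\<Sum>\<alpha>\<in>b. (x \<eta> \<alpha>)\<^sup>2)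
       \<and> (\<Sum>\<alpha>\<in>b. (x \<xi> \<alpha>)\<^sup>2) \<le> r\<^sup>2 \<and> (\<Sum>\<alpha>\<in>b. (x \<eta> \<alpha>)\<^sup>2) \<le> r\<^sup>2"
      if h: "\<xi> \<noteq> \<eta>" "b \<in> ?F" for \<xi> \<eta> b
      using sq_diff_disj[OF assms(4)[OF h(1)], of b] normA_ge_sq[OF fin h(2), of \<xi>]
          normA_ge_sq[OF fin h(2), of \<eta>] assms(5)[of \<xi>] assms(5)[of \<eta>] by simp
    have P1: "\<exists>\<xi> \<eta>. \<xi> < \<eta> \<and> normA ?F (x \<xi> - x \<eta>) = sqrt 2 * r"
    proof -
      have disj: "\<forall>\<xi> \<eta>. \<xi> \<noteq> \<eta> \<longrightarrow> a \<xi> \<inter> a \<eta> = {}"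
        using a(2) assms(4) by blast
      obtain \<xi> \<eta> where xe: "\<xi> < \<eta>" and col: "(fst \<circ> c) ` otimes (a \<xi>) (a \<eta>) = {0}"
      proof -
        have h1: "\<forall>\<xi>. finite (a \<xi>) \<and> a \<xi> \<noteq> {}" using afin ane by blast
        show ?thesis using conjunct1[OF ST[of a, OF h1 disj]] that by blast
      qed
      have ne: "\<xi> \<noteq> \<eta>" using xe by simp
      have bF: "a \<xi> \<union> a \<eta> \<in> ?F"
        unfolding T0_family_def
      proof (intro CollectI conjI)
        show "finite (a \<xi> \<union> a \<eta>)" using afin by simp
        show "(fst \<circ> c) ` pairs (a \<xi> \<union> a \<eta>) \<subseteq> {0}"
        proof
          fix z assume "z \<in> (fst \<circ> c) ` pairs (a \<xi> \<union> a \<eta>)"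
          then obtain \<alpha> \<beta> where z: "z = fst (c {\<alpha>, \<beta>})" and ab: "\<alpha> \<in> a \<xi> \<union> a \<eta>" "\<beta> \<in> a \<xi> \<union> a \<eta>" "\<alpha> \<noteq> \<beta>"
            unfolding pairs_def by auto
          show "z \<in> {0}"
          proof (cases "\<alpha> \<in> a \<xi>"; cases "\<beta> \<in> a \<xi>")
            assume "\<alpha> \<in> a \<xi>" "\<beta> \<in> a \<xi>"
            hence "{\<alpha>, \<beta>} \<in> pairs (a \<xi>)" using ab unfolding pairs_def by auto
            thus ?thesis using a(1)[of \<xi>] z unfolding T0_family_def by auto
          next
            assume "\<alpha> \<in> a \<xi>" "\<beta> \<notin> a \<xi>"
            hence "{\<alpha>, \<beta>} \<in> otimes (a \<xi>) (a \<eta>)" using ab unfolding otimes_def by auto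
            thus ?thesis using col z by (metis comp_apply image_eqI)
          next
            assume "\<alpha> \<notin> a \<xi>" "\<beta> \<in> a \<xi>"
            hence "{\<beta>, \<alpha>} \<in> otimes (a \<xi>) (a \<eta>)" using ab unfolding otimes_def by auto
            thus ?thesis using col z by (metis comp_apply image_eqI insert_commute)
          next
            assume "\<alpha> \<notin> a \<xi>" "\<beta> \<notin> a \<xi>"
            hence "{\<alpha>, \<beta>} \<in> pairs (a \<eta>)" using ab unfolding pairs_def by auto
            thus ?thesis using a(1)[of \<eta>] z unfolding T0_family_def by auto
          qed
        qed
      qed
      have z1: "\<alpha> \<in> a \<xi> \<Longrightarrow> x \<eta> \<alpha> = 0" for \<alpha> using a(2) assms(4)[OF ne] unfolding supp_def by blast
      have z2: "\<alpha> \<in> a \<eta> \<Longrightarrow> x \<xi> \<alpha> = 0" for \<alpha> using a(2) assms(4)[OF ne] unfolding supp_def by blast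
      have "(\<Sum>\<alpha>\<in>a \<xi> \<union> a \<eta>. ((x \<xi> - x \<eta>) \<alpha>)\<^sup>2)
          = (\<Sum>\<alpha>\<in>a \<xi>. ((x \<xi> - x \<eta>) \<alpha>)\<^sup>2) + (\<Sum>\<alpha>\<in>a \<eta>. ((x \<xi> - x \<eta>) \<alpha>)\<^sup>2)"
        using afin disj ne by (intro sum.union_disjoint) auto
      also have "\<dots> = r\<^sup>2 + r\<^sup>2" using asq z1 z2 by simp
      finally have s2: "(\<Sum>\<alpha>\<in>a \<xi> \<union> a \<eta>. ((x \<xi> - x \<eta>) \<alpha>)\<^sup>2) = 2 * r\<^sup>2" by simp
      have "sqrt (2 * r\<^sup>2) = sqrt 2 * r" using rpos by (simp add: real_sqrt_mult)
      hence ge: "sqrt 2 * r \<le> normA ?F (x \<xi> - x \<eta>)"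
      proof -
        have "sqrt (2 * r\<^sup>2) \<le> normA ?F (x \<xi> - x \<eta>)"
          using normA_ge[OF supp_diff_fin[OF fin fin] bF, of \<xi> \<eta>] unfolding s2 .
        thus ?thesis using \<open>sqrt (2 * r\<^sup>2) = sqrt 2 * r\<close> by simp
      qed
      have le: "normA ?F (x \<xi> - x \<eta>) \<le> sqrt 2 * r"
      proof (rule normA_le)
        fix b assume "b \<in> ?F"
        hence "(\<Sum>\<alpha>\<in>b. ((x \<xi> - x \<eta>) \<alpha>)\<^sup>2) \<le> 2 * r\<^sup>2" using upper[OF ne] by fastforce
        hence "sqrt (\<Sum>\<alpha>\<in>b. ((x \<xi> - x \<eta>) \<alpha>)\<^sup>2) \<le> sqrt (2 * r\<^sup>2)" by simp
        thus "sqrt (\<Sum>\<alpha>\<in>b. ((x \<xi> - x \<eta>) \<alpha>)\<^sup>2) \<le> sqrt 2 * r" using \<open>sqrt (2 * r\<^sup>2) = sqrt 2 * r\<close> by simp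
      qed
      show ?thesis using ge le xe by force
    qed
    have P2: "\<exists>\<xi> \<eta>. \<xi> < \<eta> \<and> normA ?F (x \<xi> - x \<eta>) = r"
    proof -
      obtain \<xi> \<eta> where xe: "\<xi> < \<eta>" and col: "(fst \<circ> c) ` otimes (supp (x \<xi>)) (supp (x \<eta>)) = {1}"
      proof -
        have h1: "\<forall>\<xi>. finite (supp (x \<xi>)) \<and> supp (x \<xi>) \<noteq> {}" using fin sne by blast
        have h2: "\<forall>\<xi> \<eta>. \<xi> \<noteq> \<eta> \<longrightarrow> supp (x \<xi>) \<inter> supp (x \<eta>) = {}" using assms(4) by blast
        show ?thesis using conjunct2[OF ST[of "\<lambda>\<xi>. supp (x \<xi>)", OF h1 h2]] that by blast
      qed
      have ne: "\<xi> \<noteq> \<eta>" using xe by simp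
      have z1: "\<alpha> \<in> a \<xi> \<Longrightarrow> x \<eta> \<alpha> = 0" for \<alpha> using a(2) assms(4)[OF ne] unfolding supp_def by blast
      have "(\<Sum>\<alpha>\<in>a \<xi>. ((x \<xi> - x \<eta>) \<alpha>)\<^sup>2) = r\<^sup>2" using asq z1 by simp
      hence ge0: "sqrt (r\<^sup>2) \<le> normA ?F (x \<xi> - x \<eta>)"
        using normA_ge[OF supp_diff_fin[OF fin fin] a(1)[of \<xi>], of \<xi> \<eta>] by simp
      hence ge: "r \<le> normA ?F (x \<xi> - x \<eta>)" using rpos by simp
      have le: "normA ?F (x \<xi> - x \<eta>) \<le> r"
      proof (rule normA_le)
        fix b assume bF: "b \<in> ?F"
        have "(\<Sum>\<alpha>\<in>b. (x \<xi> \<alpha>)\<^sup>2) = 0 \<or> (\<Sum>\<alpha>\<in>b. (x \<eta> \<alpha>)\<^sup>2) = 0"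
        proof (rule ccontr)
          assume nz: "\<not> ((\<Sum>\<alpha>\<in>b. (x \<xi> \<alpha>)\<^sup>2) = 0 \<or> (\<Sum>\<alpha>\<in>b. (x \<eta> \<alpha>)\<^sup>2) = 0)"
          have "\<exists>\<alpha>\<in>b. x \<xi> \<alpha> \<noteq> 0"
          proof (rule ccontr)
            assume "\<not> (\<exists>\<alpha>\<in>b. x \<xi> \<alpha> \<noteq> 0)"
            hence "(\<Sum>\<alpha>\<in>b. (x \<xi> \<alpha>)\<^sup>2) = 0" by simp
            thus False using nz by simp
          qed
          moreover have "\<exists>\<beta>\<in>b. x \<eta> \<beta> \<noteq> 0"
          proof (rule ccontr)
            assume "\<not> (\<exists>\<alpha>\<in>b. x \<eta> \<alpha> \<noteq> 0)"
            hence "(\<Sum>\<alpha>\<in>b. (x \<eta> \<alpha>)\<^sup>2) = 0" by simp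
            thus False using nz by simp
          qed
          ultimately obtain \<alpha> \<beta> where "\<alpha> \<in> b" "x \<xi> \<alpha> \<noteq> 0" "\<beta> \<in> b" "x \<eta> \<beta> \<noteq> 0"
            by blast
          hence ab: "\<alpha> \<in> supp (x \<xi>)" "\<beta> \<in> supp (x \<eta>)" "\<alpha> \<in> b" "\<beta> \<in> b" unfolding supp_def by auto
          hence "\<alpha> \<noteq> \<beta>" using assms(4)[OF ne] by blast
          hence "{\<alpha>, \<beta>} \<in> pairs b" using ab unfolding pairs_def by auto
          hence "fst (c {\<alpha>, \<beta>}) = 0" using bF unfolding T0_family_def by auto
          moreover have "{\<alpha>, \<beta>} \<in> otimes (supp (x \<xi>)) (supp (x \<eta>))" using ab unfolding otimes_def by auto
          hence "fst (c {\<alpha>, \<beta>}) = 1" using col by (metis comp_apply image_eqI singletonD)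
          ultimately show False by simp
        qed
        hence "(\<Sum>\<alpha>\<in>b. ((x \<xi> - x \<eta>) \<alpha>)\<^sup>2) \<le> r\<^sup>2" using upper[OF ne bF] by auto
        hence "sqrt (\<Sum>\<alpha>\<in>b. ((x \<xi> - x \<eta>) \<alpha>)\<^sup>2) \<le> sqrt (r\<^sup>2)" by (rule real_sqrt_le_mono)
        thus "sqrt (\<Sum>\<alpha>\<in>b. ((x \<xi> - x \<eta>) \<alpha>)\<^sup>2) \<le> r" using rpos by simp
      qed
      show ?thesis using ge le xe by force
    qed
    show ?thesis using P1 P2 by blast
  qed
qed

end
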